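(* Let $0<\alpha<\pi/4$ and $0<\beta\le\pi/4$, and consider the system on $S^2$ described in the context. There is no normal extremal pair $(x,\lambda)$ with $x(0)=N=(0,0,1)$ and a time $t_c>0$ such that the extremal is bang-bang on $[0,t_c]$ and, on an interval $[t_c,t_c+\varepsilon]$ with $\varepsilon>0$, is $u_1$-singular or $u_2$-singular (partially singular).
   Context: The system is $\dot x=Fx+u_1G_1x+u_2G_2x$ on the unit sphere $S^2\subset\mathbb R^3$, measurable controls $|u_i|\le1$, with $F=\cos\alpha\begin{pmatrix}0&-1&0\\1&0&0\\0&0&0\end{pmatrix}$, $G_1=\sin\alpha\sin\beta\begin{pmatrix}0&0&0\\0&0&-1\\0&1&0\end{pmatrix}$, $G_2=\sin\alpha\cos\beta\begin{pmatrix}0&0&-1\\0&0&0\\1&0&0\end{pmatrix}$. An extremal pair: trajectory $x$ with control $u$, Lipschitz row vector $\lambda(t)\in\mathbb R^3$ with $\lambda(t)\cdot x(t)=0$, $\lambda(t)\ne0$, and constant $\lambda_0\le0$, such that a.e. $\dot\lambda=-\lambda(F+u_1G_1+u_2G_2)$, $u(t)$ maximizes $\lambda Fx+u_1\lambda G_1x+u_2\lambda G_2x+\lambda_0$ over $[-1,1]^2$, and the maximum is $0$; normal if $\lambda_0<0$. Switching functions $\phi_i=\lambda G_ix$; $u_i$-singular on an interval means $\phi_i\equiv0$ there. Bang-bang on an interval: finitely many arcs on which $u$ is a.e. constant in $\{-1,1\}^2$. *)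

theory Defs
  imports "HOL-Analysis.Analysis"
begin

definition Fm :: "real \<Rightarrow> real^3^3" where
  "Fm \<alpha> = cos \<alpha> *\<^sub>R vector [vector [0, -1, 0], vector [1, 0, 0], vector [0, 0, 0]]"

definition G1m :: "real \<Rightarrow> real \<Rightarrow> real^3^3" where
  "G1m \<alpha> \<beta> = (sin \<alpha> * sin \<beta>) *\<^sub>R vector [vector [0, 0, 0], vector [0, 0, -1], vector [0, 1, 0]]"

definition G2m :: "real \<Rightarrow> real \<Rightarrow> real^3^3" where
  "G2m \<alpha> \<beta> = (sin \<alpha> * cos \<beta>) *\<^sub>R vector [vector [0, 0, -1], vector [0, 0, 0], vector [1, 0, 0]]"

definition Am :: "real \<Rightarrow> real \<Rightarrow> real \<Rightarrow> real \<Rightarrow> real^3^3" where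
  "Am \<alpha> \<beta> v1 v2 = Fm \<alpha> + v1 *\<^sub>R G1m \<alpha> \<beta> + v2 *\<^sub>R G2m \<alpha> \<beta>"

definition north :: "real^3" where
  "north = vector [0, 0, 1]"

definition ham :: "real \<Rightarrow> real \<Rightarrow> real^3 \<Rightarrow> real^3 \<Rightarrow> real \<Rightarrow> real \<Rightarrow> real \<Rightarrow> real" where
  "ham \<alpha> \<beta> l x l0 v1 v2 = l \<bullet> (Am \<alpha> \<beta> v1 v2 *v x) + l0"

definition extremal ::
  "real \<Rightarrow> real \<Rightarrow> real \<Rightarrow> (real \<Rightarrow> real^3) \<Rightarrow> (real \<Rightarrow> real) \<Rightarrow> (real \<Rightarrow> real)
     \<Rightarrow> (real \<Rightarrow> real^3) \<Rightarrow> real \<Rightarrow> bool" where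
  "extremal \<alpha> \<beta> T x u1 u2 lam l0 \<longleftrightarrow>
     0 < T \<and>
     u1 measurable_on {0..T} \<and> u2 measurable_on {0..T} \<and>
     (\<forall>t\<in>{0..T}. \<bar>u1 t\<bar> \<le> 1 \<and> \<bar>u2 t\<bar> \<le> 1) \<and>
     (\<forall>t\<in>{0..T}. norm (x t) = 1) \<and>
     (\<forall>t\<in>{0..T}. ((\<lambda>s. Am \<alpha> \<beta> (u1 s) (u2 s) *v x s) has_integral (x t - x 0)) {0..t}) \<and>
     (\<exists>L. L-lipschitz_on {0..T} lam) \<and>
     (\<forall>t\<in>{0..T}. lam t \<bullet> x t = 0 \<and> lam t \<noteq> 0) \<and>
     l0 \<le> 0 \<and>
     (AE t in lborel. t \<in> {0..T} \<longrightarrow>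
        (lam has_vector_derivative (- (lam t v* Am \<alpha> \<beta> (u1 t) (u2 t)))) (at t within {0..T})) \<and>
     (AE t in lborel. t \<in> {0..T} \<longrightarrow>
        ham \<alpha> \<beta> (lam t) (x t) l0 (u1 t) (u2 t) = 0 \<and>
        (\<forall>v1 v2. \<bar>v1\<bar> \<le> 1 \<longrightarrow> \<bar>v2\<bar> \<le> 1 \<longrightarrow>
           ham \<alpha> \<beta> (lam t) (x t) l0 v1 v2 \<le> ham \<alpha> \<beta> (lam t) (x t) l0 (u1 t) (u2 t)))"

definition phi1 :: "real \<Rightarrow> real \<Rightarrow> (real \<Rightarrow> real^3) \<Rightarrow> (real \<Rightarrow> real^3) \<Rightarrow> real \<Rightarrow> real" where
  "phi1 \<alpha> \<beta> lam x t = lam t \<bullet> (G1m \<alpha> \<beta> *v x t)"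

definition phi2 :: "real \<Rightarrow> real \<Rightarrow> (real \<Rightarrow> real^3) \<Rightarrow> (real \<Rightarrow> real^3) \<Rightarrow> real \<Rightarrow> real" where
  "phi2 \<alpha> \<beta> lam x t = lam t \<bullet> (G2m \<alpha> \<beta> *v x t)"

definition bang_bang :: "(real \<Rightarrow> real) \<Rightarrow> (real \<Rightarrow> real) \<Rightarrow> real \<Rightarrow> real \<Rightarrow> bool" where
  "bang_bang u1 u2 a b \<longleftrightarrow>
     (\<exists>(n::nat) (s::nat \<Rightarrow> real) (c1::nat \<Rightarrow> real) (c2::nat \<Rightarrow> real).
        s 0 = a \<and> s n = b \<and> (\<forall>k<n. s k < s (Suc k)) \<and>
        (\<forall>k<n. c1 k \<in> {-1, 1} \<and> c2 k \<in> {-1, 1} \<and>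
           (AE t in lborel. t \<in> {s k<..<s (Suc k)} \<longrightarrow> u1 t = c1 k \<and> u2 t = c2 k)))"

end

theory Submission
  imports Defs
begin




lemma AE_dense:
  assumes "AE t in lborel. Q t" "(c::real) < d"
  shows "\<exists>t\<in>{c<..<d}. Q t"
proof (rule ccontr)
  assume "\<not> ?thesis"
  then have "AE t in lborel. t \<notin> {c<..<d}" using assms(1) by (auto elim: eventually_mono)
  then have "{c<..<d} \<in> null_sets lborel" by (simp add: AE_iff_null_sets)
  then show False using assms(2) by (simp add: null_sets_def emeasure_lborel_Ioo)
qed

lemma AE_negl:
  assumes "AE t in lborel. P t"
  obtains N :: "real set" where "negligible N" "\<And>t. t \<notin> N \<Longrightarrow> P t"
proof -
  from assms obtain N where N: "{t \<in> space lborel. \<not> P t} \<subseteq> N" "N \<in> null_sets lborel"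
    by (auto elim!: AE_E simp: null_sets_def)
  then have "negligible N"
    by (simp add: negligible_iff_null_sets null_sets_completionI)
  then show ?thesis using that N by auto
qed



lemma sard1:
  fixes f :: "real \<Rightarrow> real"
  assumes "\<And>t. t \<in> Z \<Longrightarrow> (f has_real_derivative 0) (at t within Z)"
  shows "negligible (f ` Z)"
proof -
  define F :: "real^1 \<Rightarrow> real^1" where "F = (\<lambda>v. vec (f (v$1)))"
  define Z' :: "(real^1) set" where "Z' = (\<lambda>v. v$1) -` Z"
  have "negligible (F ` Z')"
  proof (rule baby_Sard[where f' = "\<lambda>_ (_::real^1). 0::real^1"])
    fix v assume v: "v \<in> Z'"
    have d1: "((\<lambda>v::real^1. v$1) has_derivative (\<lambda>h. h$1)) (at v within Z')"
      by (rule bounded_linear_imp_has_derivative) (simp add: bounded_linear_vec_nth)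
    have im: "(\<lambda>v::real^1. v$1) ` Z' = Z"
      unfolding Z'_def by (auto intro!: image_eqI[where x="vec _"])
    have d2: "(f has_derivative (\<lambda>h. 0)) (at (v$1) within Z)"
    proof -
      have "(*) (0::real) = (\<lambda>h. 0)" by auto
      then show ?thesis using assms[of "v$1"] v unfolding Z'_def has_field_derivative_def by simp
    qed
    have "((\<lambda>v::real^1. f (v$1)) has_derivative (\<lambda>h. 0)) (at v within Z')"
      using has_derivative_in_compose[OF d1, of f "\<lambda>h. 0"] d2 im by simp
    then have "((\<lambda>v::real^1. vec (f (v$1)) :: real^1) has_derivative (\<lambda>h. vec 0)) (at v within Z')"
      using has_derivative_compose[OF _ bounded_linear_imp_has_derivative[OF linear_conv_bounded_linear[THEN iffD1, OF linear_vec]], of "\<lambda>v::real^1. f (v$1)" "\<lambda>h. 0"]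
      by (simp add: o_def)
    then show "(F has_derivative (\<lambda>_. 0)) (at v within Z')"
      by (simp add: F_def vec_0)
  next
    fix v show "rank (matrix ((\<lambda>_ (_::real^1). 0::real^1) v)) < CARD(1)"
    proof -
      have "matrix (\<lambda>_::real^1. 0::real^1) = 0" by (simp add: matrix_def vec_eq_iff)
      then show ?thesis by simp
    qed
  qed simp
  note negF = this
  have "negligible ((\<lambda>v::real^1. v$1) ` (F ` Z'))"
    apply (rule negligible_differentiable_image_negligible[where S="F ` Z'" and f="\<lambda>v::real^1. v$1"])
      apply simp
     apply (rule negF)
    by (auto simp: differentiable_on_def intro!: bounded_linear_imp_differentiable bounded_linear_vec_nth)
  moreover have "(\<lambda>v::real^1. v$1) ` (F ` Z') = f ` Z"
    unfolding F_def Z'_def by (auto simp: image_iff intro!: bexI[where x="vec _"])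
  ultimately show ?thesis by simp
qed


lemma lip_const:
  fixes f :: "real \<Rightarrow> real"
  assumes ab: "a \<le> b" and lip: "L-lipschitz_on {a..b} f" and N: "negligible N"
    and der: "\<And>t. t \<in> {a..b} - N \<Longrightarrow> (f has_real_derivative 0) (at t within {a..b})"
  shows "f b = f a"
proof -
  have n1: "negligible (f ` ({a..b} \<inter> N))"
  proof (rule negligible_locally_Lipschitz_image)
    show "negligible ({a..b} \<inter> N)" using N by (simp add: negligible_Int)
    fix x assume x: "x \<in> {a..b} \<inter> N"
    show "\<exists>T B. open T \<and> x \<in> T \<and> (\<forall>y\<in>{a..b} \<inter> N \<inter> T. norm (f y - f x) \<le> B * norm (y - x))"
    proof (intro exI conjI ballI)
      fix y assume y: "y \<in> {a..b} \<inter> N \<inter> UNIV"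
      have "dist (f y) (f x) \<le> L * dist y x" using x y by (intro lipschitz_onD[OF lip]) auto
      then show "norm (f y - f x) \<le> L * norm (y - x)" by (simp add: dist_norm)
    qed auto
  qed simp
  have n2: "negligible (f ` ({a..b} - N))"
  proof (rule sard1)
    fix t assume "t \<in> {a..b} - N"
    then show "(f has_real_derivative 0) (at t within {a..b} - N)"
      using der DERIV_subset[of f 0 t "{a..b}" "{a..b} - N"] by blast
  qed
  have "f ` {a..b} = f ` ({a..b} \<inter> N) \<union> f ` ({a..b} - N)" by auto
  with n1 n2 have neg: "negligible (f ` {a..b})" by simp
  have "connected (f ` {a..b})"
    by (rule connected_continuous_image) (auto intro: lipschitz_on_continuous_on[OF lip])
  then have iv: "is_interval (f ` {a..b})" by (simp add: is_interval_connected_1)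
  show ?thesis
  proof (rule ccontr)
    assume ne: "f b \<noteq> f a"
    define m where "m = min (f a) (f b)"
    define M where "M = max (f a) (f b)"
    have mM: "m < M" using ne by (auto simp: m_def M_def)
    have "{m<..<M} \<subseteq> f ` {a..b}"
    proof
      fix z assume z: "z \<in> {m<..<M}"
      have "f a \<in> f ` {a..b}" "f b \<in> f ` {a..b}" using ab by auto
      moreover have "m \<le> z" "z \<le> M" using z by auto
      moreover have "m \<in> f ` {a..b}" "M \<in> f ` {a..b}" using \<open>f a \<in> f ` {a..b}\<close> \<open>f b \<in> f ` {a..b}\<close>
        unfolding m_def M_def by (auto simp: min_def max_def)
      ultimately show "z \<in> f ` {a..b}" using iv unfolding is_interval_1 by blast
    qed
    then have "negligible {m<..<M}" using neg negligible_subset by blast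
    moreover have "\<not> negligible {m<..<M}" by (rule open_not_negligible) (use mM in auto)
    ultimately show False by simp
  qed
qed



lemma vd_inner:
  assumes "(f has_vector_derivative D) F"
  shows "((\<lambda>s. Q \<bullet> f s) has_real_derivative Q \<bullet> D) F"
proof -
  have "((\<lambda>s. Q \<bullet> f s) has_derivative (\<lambda>h. Q \<bullet> (h *\<^sub>R D))) F"
    using assms unfolding has_vector_derivative_def by (rule has_derivative_inner_right)
  moreover have "(\<lambda>h. Q \<bullet> (h *\<^sub>R D)) = (*) (Q \<bullet> D)" by (rule ext) (simp add: mult.commute)
  ultimately show ?thesis unfolding has_field_derivative_def by simp
qed

lemma deriv_zero_open:
  fixes f :: "real \<Rightarrow> real"
  assumes "(f has_real_derivative D) (at t)" "open U" "t \<in> U" "\<And>s. s \<in> U \<Longrightarrow> f s = 0"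
  shows "D = 0"
proof -
  have "((\<lambda>s. 0) has_real_derivative D) (at t)"
    by (rule has_field_derivative_transform_within_open[OF assms(1-3)]) (use assms(4) in simp)
  then show ?thesis using DERIV_const DERIV_unique by blast
qed

lemma cont_ae_zero:
  fixes g :: "real \<Rightarrow> real"
  assumes ab: "a < b" and cg: "continuous_on {a..b} g"
    and ae: "AE t in lborel. t \<in> {a..b} \<longrightarrow> g t = 0" and t: "t \<in> {a..b}"
  shows "g t = 0"
proof (rule ccontr)
  assume ne: "g t \<noteq> 0"
  then have "\<bar>g t\<bar> > 0" by simp
  with cg t obtain d where d: "d > 0" "\<And>s. s \<in> {a..b} \<Longrightarrow> dist s t < d \<Longrightarrow> dist (g s) (g t) < \<bar>g t\<bar>"
    unfolding continuous_on_iff by blast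
  define c1 where "c1 = max a (t - d)"
  define c2 where "c2 = min b (t + d)"
  have "c1 < c2" using ab t d by (auto simp: c1_def c2_def)
  then obtain s where s: "s \<in> {c1<..<c2}" "s \<in> {a..b} \<longrightarrow> g s = 0"
    using AE_dense[OF ae] by blast
  have "s \<in> {a..b}" "dist s t < d" using s by (auto simp: c1_def c2_def dist_real_def)
  then have "dist (g s) (g t) < \<bar>g t\<bar>" by (rule d(2))
  moreover have "g s = 0" using s \<open>s \<in> {a..b}\<close> by blast
  ultimately show False by (simp add: dist_real_def)
qed

lemma Am_mv:
  "Am al be v1 v2 *v x = vector [- cos al * x$2 - sin al * cos be * v2 * x$3,
                                  cos al * x$1 - sin al * sin be * v1 * x$3,
                                  sin al * cos be * v2 * x$1 + sin al * sin be * v1 * x$2]"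
  by (simp add: Am_def Fm_def G1m_def G2m_def vec_eq_iff forall_3 matrix_vector_mult_def sum_3 algebra_simps)
lemma vA:
  "l v* Am al be v1 v2 = vector [cos al * l$2 + sin al * cos be * v2 * l$3,
                                  - cos al * l$1 + sin al * sin be * v1 * l$3,
                                  - sin al * cos be * v2 * l$1 - sin al * sin be * v1 * l$2]"
  by (simp add: Am_def Fm_def G1m_def G2m_def vec_eq_iff forall_3 vector_matrix_mult_def sum_3 algebra_simps)
lemma inner3: "(x::real^3) \<bullet> y = x$1*y$1 + x$2*y$2 + x$3*y$3"
  by (simp add: inner_vec_def sum_3)


lemma id_lag: "((x2::real)*l3 - x3*l2)^2 + (x3*l1 - x1*l3)^2 + (x1*l2 - x2*l1)^2 = (x1^2+x2^2+x3^2)*(l1^2+l2^2+l3^2) - (x1*l1+x2*l2+x3*l3)^2"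
  by (simp add: power2_eq_square algebra_simps)
lemma id_pD: "((x2::real)*l3 - x3*l2)*(w2*l3 - c*l2) + (x3*l1 - x1*l3)*(c*l1 - w1*l3) + (x1*l2 - x2*l1)*(w1*l2 - w2*l1) = (l1^2+l2^2+l3^2)*(w1*x1+w2*x2+c*x3) - (x1*l1+x2*l2+x3*l3)*(w1*l1+w2*l2+c*l3)"
  by (simp add: power2_eq_square algebra_simps)
lemma id_l1: "((x3::real)*l1 - x1*l3)*x3 - (x1*l2 - x2*l1)*x2 = (x1^2+x2^2+x3^2)*l1 - (x1*l1+x2*l2+x3*l3)*x1"
  by (simp add: power2_eq_square algebra_simps)
lemma id_l2: "((x1::real)*l2 - x2*l1)*x1 - (x2*l3 - x3*l2)*x3 = (x1^2+x2^2+x3^2)*l2 - (x1*l1+x2*l2+x3*l3)*x2"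
  by (simp add: power2_eq_square algebra_simps)
lemma id_l3: "((x2::real)*l3 - x3*l2)*x2 - (x3*l1 - x1*l3)*x1 = (x1^2+x2^2+x3^2)*l3 - (x1*l1+x2*l2+x3*l3)*x3"
  by (simp add: power2_eq_square algebra_simps)
lemma id_pl: "((x2::real)*l3 - x3*l2)*l1 + (x3*l1 - x1*l3)*l2 + (x1*l2 - x2*l1)*l3 = 0"
  by (simp add: algebra_simps)
lemma id_px: "((x2::real)*l3 - x3*l2)*x1 + (x3*l1 - x1*l3)*x2 + (x1*l2 - x2*l1)*x3 = 0"
  by (simp add: algebra_simps)
lemma id_q: "((x2::real)*l3 - x3*l2)*(w2*x3 - c*x2) + (x3*l1 - x1*l3)*(c*x1 - w1*x3) + (x1*l2 - x2*l1)*(w1*x2 - w2*x1) = (x1*l1+x2*l2+x3*l3)*(w1*x1+w2*x2+c*x3) - (x1^2+x2^2+x3^2)*(w1*l1+w2*l2+c*l3)"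
  by (simp add: power2_eq_square algebra_simps)
lemma id_W1: "(w2::real)*(x1*l2 - x2*l1) - c*(x3*l1 - x1*l3) = x1*(w1*l1+w2*l2+c*l3) - l1*(w1*x1+w2*x2+c*x3)"
  by (simp add: algebra_simps)
lemma id_W2: "(c::real)*(x2*l3 - x3*l2) - w1*(x1*l2 - x2*l1) = x2*(w1*l1+w2*l2+c*l3) - l2*(w1*x1+w2*x2+c*x3)"
  by (simp add: algebra_simps)
lemma cs2: "((a::real)*\<bar>y\<bar>+b*\<bar>z\<bar>)^2 \<le> (a^2+b^2)*(y^2+z^2)"
proof -
  have "(a^2+b^2)*(y^2+z^2) - (a*\<bar>y\<bar>+b*\<bar>z\<bar>)^2 = (a*\<bar>z\<bar>-b*\<bar>y\<bar>)^2"
    by (simp add: power2_eq_square algebra_simps abs_mult_self_eq)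
  then show ?thesis by (metis diff_ge_0_iff_ge zero_le_power2)
qed
lemma ule: assumes "\<bar>u\<bar> \<le> (1::real)" shows "u*y \<le> \<bar>y\<bar>"
proof -
  have "u*y \<le> \<bar>u*y\<bar>" by (rule abs_ge_self)
  also have "\<dots> = \<bar>u\<bar>*\<bar>y\<bar>" by (rule abs_mult)
  also have "\<dots> \<le> 1*\<bar>y\<bar>" by (rule mult_right_mono[OF assms abs_ge_zero])
  finally show ?thesis by simp
qed
lemma quad_finite:
  assumes "(A::real) \<noteq> 0" shows "finite {z. A*z^2 + B*z + C = 0}"
proof (cases "{z. A*z^2 + B*z + C = 0} = {}")
  case False
  then obtain z0 where z0: "A*z0^2 + B*z0 + C = 0" by auto
  have "{z. A*z^2 + B*z + C = 0} \<subseteq> {z0, -B/A - z0}"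
  proof
    fix z assume "z \<in> {z. A*z^2 + B*z + C = 0}"
    then have "A*z^2 + B*z + C = 0" by simp
    with z0 have "(z - z0) * (A*(z+z0) + B) = 0" by (simp add: power2_eq_square algebra_simps)
    then have "z = z0 \<or> A*(z+z0) + B = 0" by simp
    then show "z \<in> {z0, -B/A - z0}" using assms by (auto simp: field_simps)
  qed
  then show ?thesis by (rule finite_subset) simp
qed simp

lemma phi1_eq: "phi1 al be lam x t = sin al * sin be * (x t$2 * lam t$3 - x t$3 * lam t$2)"
  by (simp add: phi1_def G1m_def matrix_vector_mult_def sum_3 inner3 algebra_simps)
lemma phi2_eq: "phi2 al be lam x t = - (sin al * cos be * (x t$3 * lam t$1 - x t$1 * lam t$3))"
  by (simp add: phi2_def G2m_def matrix_vector_mult_def sum_3 inner3 algebra_simps)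
lemma north3: "north$1 = 0" "north$2 = 0" "north$3 = 1"
  by (simp_all add: north_def)

lemma ham_eq: "ham al be l x l0 v1 v2 = cos al * (x$1*l$2 - x$2*l$1) + v1 * (sin al * sin be) * (x$2*l$3 - x$3*l$2) - v2 * (sin al * cos be) * (x$3*l$1 - x$1*l$3) + l0"
  by (simp add: ham_def Am_mv inner3 algebra_simps)
lemma skew: "l \<bullet> (l v* Am al be v1 v2) = 0"
  by (simp add: vA inner3 algebra_simps)
lemma vd_self:
  assumes "(f has_vector_derivative D) (at t within S)" "f t \<bullet> D = 0"
  shows "((\<lambda>s. f s \<bullet> f s) has_real_derivative 0) (at t within S)"
proof -
  have "((\<lambda>s. f s \<bullet> f s) has_derivative (\<lambda>h. f t \<bullet> (h *\<^sub>R D) + (h *\<^sub>R D) \<bullet> f t)) (at t within S)"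
    using assms(1) unfolding has_vector_derivative_def by (intro has_derivative_inner)
  moreover have "(\<lambda>h. f t \<bullet> (h *\<^sub>R D) + (h *\<^sub>R D) \<bullet> f t) = (*) 0"
    using assms(2) by (intro ext) (simp add: inner_commute)
  ultimately show ?thesis unfolding has_field_derivative_def by simp
qed
lemma final_arith:
  fixes k c P P3 h mu S :: real
  assumes k: "k > 0" and c: "c > 0" and e1: "k*P3 = c*\<bar>P\<bar>" and e2: "c*P3 + k*\<bar>P\<bar> = h"
    and e3: "P^2 + P3^2 = mu" and e4: "h^2 \<le> S*mu" and e5: "S < c^2" and h: "h > 0"
  shows False
proof -
  have kh: "k*h = (c^2+k^2)*\<bar>P\<bar>"
  proof -
    have "k*h = c*(k*P3) + k^2*\<bar>P\<bar>" using e2 by (simp add: power2_eq_square algebra_simps flip: e2)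
    also have "\<dots> = (c^2+k^2)*\<bar>P\<bar>" using e1 by (simp add: power2_eq_square algebra_simps)
    finally show ?thesis .
  qed
  have km: "k^2*mu = (c^2+k^2)*P^2"
  proof -
    have "k^2*mu = k^2*P^2 + (k*P3)^2" using e3 by (simp add: power2_eq_square algebra_simps flip: e3)
    also have "\<dots> = (c^2+k^2)*P^2" using e1 by (simp add: power2_eq_square algebra_simps abs_mult_self_eq)
    finally show ?thesis .
  qed
  have "k^2*h^2 = k^2*((c^2+k^2)*mu)"
  proof -
    have "k^2*h^2 = (k*h)^2" by (simp add: power_mult_distrib)
    also have "\<dots> = (c^2+k^2)*((c^2+k^2)*P^2)" using kh by (simp add: power2_eq_square algebra_simps abs_mult_self_eq)
    also have "\<dots> = k^2*((c^2+k^2)*mu)" using km by simp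
    finally show ?thesis .
  qed
  then have hh: "h^2 = (c^2+k^2)*mu" using k by simp
  have "mu > 0"
  proof (rule ccontr)
    assume "\<not> mu > 0"
    moreover have "c^2+k^2 > 0" using c by (simp add: add_pos_nonneg)
    ultimately have "h^2 \<le> 0" using hh mult_nonneg_nonpos[of "c^2+k^2" mu] by simp
    then show False using h by (simp add: not_le)
  qed
  then have "c^2+k^2 \<le> S" using e4 hh by simp
  moreover have "k^2 > 0" using k by simp
  ultimately show False using e5 by simp
qed
lemma final_arith0:
  fixes c P3 h mu S :: real
  assumes c: "c > 0" and e2: "c*P3 = h" and e3: "P3^2 = mu" and e4: "h^2 \<le> S*mu" and e5: "S < c^2" and h: "h > 0"
  shows False
proof -
  have hh: "h^2 = c^2*mu" using e2 e3 by (simp add: power_mult_distrib flip: e2 e3)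
  have "mu > 0"
  proof (rule ccontr)
    assume "\<not> mu > 0"
    then have "h^2 \<le> 0" using hh mult_nonneg_nonpos[of "c^2" mu] by simp
    then show False using h by (simp add: not_le)
  qed
  then have "c^2 \<le> S" using e4 hh by simp
  then show False using e5 by simp
qed
lemma sign_lemma:
  fixes u P s :: real
  assumes "\<bar>u\<bar> \<le> 1" "P \<noteq> 0" "s * P = \<bar>P\<bar>" "s * P \<le> u * P"
  shows "u = s"
proof (cases "P > 0")
  case True
  then have "s = 1" using assms(3) by simp
  moreover have "(1 - u) * P \<le> 0" using assms(4) \<open>s = 1\<close> by (simp add: algebra_simps)
  ultimately show ?thesis using True assms(1) by (auto simp: mult_le_0_iff)
next
  case False
  then have P: "P < 0" using assms(2) by simp
  then have "(s + 1) * P = 0" using assms(3) by (simp add: algebra_simps)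
  then have "s = -1" using P by simp
  moreover have "(u + 1) * P \<ge> 0" using assms(4) \<open>s = -1\<close> by (simp add: algebra_simps)
  ultimately show ?thesis using P assms(1) by (auto simp: zero_le_mult_iff)
qed


theorem corollary4:
  fixes \<alpha> \<beta> :: real
  assumes "0 < \<alpha>" and "\<alpha> < pi / 4" and "0 < \<beta>" and "\<beta> \<le> pi / 4"
  shows "\<not> (\<exists>T x u1 u2 lam l0 tc \<epsilon>.
             extremal \<alpha> \<beta> T x u1 u2 lam l0 \<and> l0 < 0 \<and> x 0 = north \<and>
             0 < tc \<and> 0 < \<epsilon> \<and> tc + \<epsilon> \<le> T \<and>
             bang_bang u1 u2 0 tc \<and>
             ((\<forall>t\<in>{tc..tc + \<epsilon>}. phi1 \<alpha> \<beta> lam x t = 0) \<or>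
              (\<forall>t\<in>{tc..tc + \<epsilon>}. phi2 \<alpha> \<beta> lam x t = 0)))"
proof
  assume "\<exists>T x u1 u2 lam l0 tc \<epsilon>.
             extremal \<alpha> \<beta> T x u1 u2 lam l0 \<and> l0 < 0 \<and> x 0 = north \<and>
             0 < tc \<and> 0 < \<epsilon> \<and> tc + \<epsilon> \<le> T \<and>
             bang_bang u1 u2 0 tc \<and>
             ((\<forall>t\<in>{tc..tc + \<epsilon>}. phi1 \<alpha> \<beta> lam x t = 0) \<or>
              (\<forall>t\<in>{tc..tc + \<epsilon>}. phi2 \<alpha> \<beta> lam x t = 0))"
  then obtain T x u1 u2 lam l0 tc \<epsilon> where
    ext: "extremal \<alpha> \<beta> T x u1 u2 lam l0" and l0: "l0 < 0" and x0: "x 0 = north"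
    and tc: "0 < tc" and ep: "0 < \<epsilon>" and tT: "tc + \<epsilon> \<le> T"
    and sing: "(\<forall>t\<in>{tc..tc + \<epsilon>}. phi1 \<alpha> \<beta> lam x t = 0) \<or> (\<forall>t\<in>{tc..tc + \<epsilon>}. phi2 \<alpha> \<beta> lam x t = 0)"
    by blast
  define a where "a = sin \<alpha> * sin \<beta>"
  define b where "b = sin \<alpha> * cos \<beta>"
  define c where "c = cos \<alpha>"
  define h where "h = - l0"
  have h0: "h > 0" using l0 by (simp add: h_def)
  have sa: "sin \<alpha> > 0" using assms by (intro sin_gt_zero) (auto intro: less_trans[of _ "pi/4"])
  have sb: "sin \<beta> > 0" using assms by (intro sin_gt_zero) (auto intro: le_less_trans[of _ "pi/4"])
  have cb: "cos \<beta> > 0" using assms by (intro cos_gt_zero) (auto intro: le_less_trans[of _ "pi/4"])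
  have ca: "cos \<alpha> > 0" using assms by (intro cos_gt_zero) (auto intro: less_trans[of _ "pi/4"])
  have a0: "a > 0" and b0: "b > 0" and c0: "c > 0" using sa sb cb ca by (simp_all add: a_def b_def c_def)
  have ab2: "a^2 + b^2 = (sin \<alpha>)^2"
  proof -
    have "a^2 + b^2 = (sin \<alpha>)^2 * ((sin \<beta>)^2 + (cos \<beta>)^2)"
      by (simp only: a_def b_def power_mult_distrib distrib_left)
    then show ?thesis by simp
  qed
  have "cos (2*\<alpha>) > 0" using assms by (intro cos_gt_zero) auto
  then have cab: "a^2 + b^2 < c^2" using ab2 by (simp add: cos_double c_def)
  from ext have T0: "0 < T"
    and ub: "\<And>t. t\<in>{0..T} \<Longrightarrow> \<bar>u1 t\<bar> \<le> 1 \<and> \<bar>u2 t\<bar> \<le> 1"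
    and nx: "\<And>t. t\<in>{0..T} \<Longrightarrow> norm (x t) = 1"
    and xi: "\<And>t. t\<in>{0..T} \<Longrightarrow> ((\<lambda>s. Am \<alpha> \<beta> (u1 s) (u2 s) *v x s) has_integral (x t - x 0)) {0..t}"
    and lipex: "\<exists>L. L-lipschitz_on {0..T} lam"
    and orth: "\<And>t. t\<in>{0..T} \<Longrightarrow> lam t \<bullet> x t = 0 \<and> lam t \<noteq> 0"
    and adj: "AE t in lborel. t \<in> {0..T} \<longrightarrow>
        (lam has_vector_derivative (- (lam t v* Am \<alpha> \<beta> (u1 t) (u2 t)))) (at t within {0..T})"
    and maxc: "AE t in lborel. t \<in> {0..T} \<longrightarrow>
        ham \<alpha> \<beta> (lam t) (x t) l0 (u1 t) (u2 t) = 0 \<and>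
        (\<forall>v1 v2. \<bar>v1\<bar> \<le> 1 \<longrightarrow> \<bar>v2\<bar> \<le> 1 \<longrightarrow>
           ham \<alpha> \<beta> (lam t) (x t) l0 v1 v2 \<le> ham \<alpha> \<beta> (lam t) (x t) l0 (u1 t) (u2 t))"
    unfolding extremal_def by blast+
  obtain L where lip: "L-lipschitz_on {0..T} lam" using lipex by blast
  define f where "f = (\<lambda>s. Am \<alpha> \<beta> (u1 s) (u2 s) *v x s)"
  have fint: "f integrable_on {0..T}" using xi[of T] T0 by (auto simp: f_def)
  have xeq: "\<And>t. t \<in> {0..T} \<Longrightarrow> x t = x 0 + integral {0..t} f"
  proof -
    fix t assume "t \<in> {0..T}"
    then have "integral {0..t} f = x t - x 0" unfolding f_def by (rule integral_unique[OF xi])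
    then show "x t = x 0 + integral {0..t} f" by simp
  qed
  have xcont: "continuous_on {0..T} x"
  proof -
    have "continuous_on {0..T} (\<lambda>t. x 0 + integral {0..t} f)"
      by (intro continuous_intros indefinite_integral_continuous_1 fint)
    then show ?thesis by (rule continuous_on_eq) (rule xeq[symmetric])
  qed
  have lcont: "continuous_on {0..T} lam" by (rule lipschitz_on_continuous_on[OF lip])
  have cx: "\<And>i. continuous_on {0..T} (\<lambda>t. x t $ i)" by (rule continuous_on_component[OF xcont])
  have cl: "\<And>i. continuous_on {0..T} (\<lambda>t. lam t $ i)" by (rule continuous_on_component[OF lcont])
  define p1 where "p1 = (\<lambda>t. x t$2 * lam t$3 - x t$3 * lam t$2)"
  define p2 where "p2 = (\<lambda>t. x t$3 * lam t$1 - x t$1 * lam t$3)"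
  define p3 where "p3 = (\<lambda>t. x t$1 * lam t$2 - x t$2 * lam t$1)"
  have cp1: "continuous_on {0..T} p1" unfolding p1_def by (intro continuous_intros cx cl)
  have cp2: "continuous_on {0..T} p2" unfolding p2_def by (intro continuous_intros cx cl)
  have cp3: "continuous_on {0..T} p3" unfolding p3_def by (intro continuous_intros cx cl)
  have sph: "\<And>t. t\<in>{0..T} \<Longrightarrow> (x t$1)^2 + (x t$2)^2 + (x t$3)^2 = 1"
    using nx by (simp add: norm_eq_1 inner3 power2_eq_square)
  have orth3: "\<And>t. t\<in>{0..T} \<Longrightarrow> x t$1 * lam t$1 + x t$2 * lam t$2 + x t$3 * lam t$3 = 0"
    using orth by (simp add: inner3 mult.commute)
  have lnz: "\<And>t. t\<in>{0..T} \<Longrightarrow> lam t \<noteq> 0" using orth by blast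
  define M where "M = (\<lambda>t. c * p3 t + a * \<bar>p1 t\<bar> + b * \<bar>p2 t\<bar> - h)"
  have hamE: "\<And>t v1 v2. ham \<alpha> \<beta> (lam t) (x t) l0 v1 v2 = c * p3 t + v1 * a * p1 t - v2 * b * p2 t - h"
    by (simp add: ham_eq a_def b_def c_def h_def p1_def p2_def p3_def)
  have Mae: "AE t in lborel. t \<in> {0..T} \<longrightarrow> M t = 0"
    using maxc
  proof (rule eventually_mono)
    fix t assume H: "t \<in> {0..T} \<longrightarrow> ham \<alpha> \<beta> (lam t) (x t) l0 (u1 t) (u2 t) = 0 \<and>
        (\<forall>v1 v2. \<bar>v1\<bar> \<le> 1 \<longrightarrow> \<bar>v2\<bar> \<le> 1 \<longrightarrow>
           ham \<alpha> \<beta> (lam t) (x t) l0 v1 v2 \<le> ham \<alpha> \<beta> (lam t) (x t) l0 (u1 t) (u2 t))"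
    show "t \<in> {0..T} \<longrightarrow> M t = 0"
    proof
      assume t: "t \<in> {0..T}"
      define s1 where "s1 = (if p1 t \<ge> 0 then 1 else -1::real)"
      define s2 where "s2 = (if p2 t \<ge> 0 then -1 else 1::real)"
      have "ham \<alpha> \<beta> (lam t) (x t) l0 s1 s2 \<le> ham \<alpha> \<beta> (lam t) (x t) l0 (u1 t) (u2 t)"
        using H t by (auto simp: s1_def s2_def)
      moreover have "ham \<alpha> \<beta> (lam t) (x t) l0 (u1 t) (u2 t) = 0" using H t by auto
      moreover have "ham \<alpha> \<beta> (lam t) (x t) l0 s1 s2 = M t"
        by (simp add: hamE M_def s1_def s2_def abs_if)
      moreover have "ham \<alpha> \<beta> (lam t) (x t) l0 (u1 t) (u2 t) \<le> M t"
      proof -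
        have "u1 t * p1 t \<le> \<bar>p1 t\<bar>" using ub[OF t] by (intro ule) auto
        then have 1: "u1 t * a * p1 t \<le> a * \<bar>p1 t\<bar>" using a0 mult_left_mono[of "u1 t * p1 t" "\<bar>p1 t\<bar>" a]
          by (simp add: algebra_simps)
        have "(- u2 t) * p2 t \<le> \<bar>p2 t\<bar>" using ub[OF t] by (intro ule) auto
        then have 2: "- (u2 t * b * p2 t) \<le> b * \<bar>p2 t\<bar>" using b0 mult_left_mono[of "(- u2 t) * p2 t" "\<bar>p2 t\<bar>" b]
          by (simp add: algebra_simps)
        show ?thesis using 1 2 by (simp add: hamE M_def)
      qed
      ultimately show "M t = 0" by linarith
    qed
  qed
  have Mz: "\<And>t. t \<in> {0..T} \<Longrightarrow> M t = 0"
    by (rule cont_ae_zero[OF T0 _ Mae]) (unfold M_def, intro continuous_intros cp1 cp2 cp3)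
  obtain Nad where Nad: "negligible Nad" and Nad': "\<And>t. t \<notin> Nad \<Longrightarrow> t \<in> {0..T} \<longrightarrow>
        (lam has_vector_derivative (- (lam t v* Am \<alpha> \<beta> (u1 t) (u2 t)))) (at t within {0..T})"
    using AE_negl[OF adj] by blast
  have L0: "L \<ge> 0" using lip by (rule lipschitz_on_nonneg)
  define K where "K = norm (lam 0) + L * T"
  have lK: "\<And>s. s \<in> {0..T} \<Longrightarrow> norm (lam s) \<le> K"
  proof -
    fix s assume s: "s \<in> {0..T}"
    have "dist (lam s) (lam 0) \<le> L * dist s 0" using s T0 by (intro lipschitz_onD[OF lip]) auto
    also have "\<dots> \<le> L * T" using s L0 by (intro mult_left_mono) (auto simp: dist_real_def)
    finally have "dist (lam s) (lam 0) \<le> L * T" .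
    then show "norm (lam s) \<le> K" unfolding K_def using norm_triangle_sub[of "lam s" "lam 0"]
      by (simp add: dist_norm)
  qed
  define nl where "nl = (\<lambda>t. lam t \<bullet> lam t)"
  have nlc: "\<And>t. t \<in> {0..T} \<Longrightarrow> nl t = nl 0"
  proof -
    fix t assume t: "t \<in> {0..T}"
    show "nl t = nl 0"
    proof (rule lip_const[of 0 t "2*K*L" nl Nad])
      show "0 \<le> t" using t by simp
      show "(2*K*L)-lipschitz_on {0..t} nl"
      proof (rule lipschitz_onI)
        fix y z assume y: "y \<in> {0..t}" and z: "z \<in> {0..t}"
        then have yT: "y \<in> {0..T}" and zT: "z \<in> {0..T}" using t by auto
        have "nl y - nl z = (lam y - lam z) \<bullet> (lam y + lam z)"
          by (simp add: nl_def inner_diff_left inner_diff_right inner_add_right inner_commute)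
        then have "dist (nl y) (nl z) = \<bar>(lam y - lam z) \<bullet> (lam y + lam z)\<bar>" by (simp add: dist_real_def)
        also have "\<dots> \<le> norm (lam y - lam z) * norm (lam y + lam z)" by (rule Cauchy_Schwarz_ineq2)
        also have "\<dots> \<le> (L * dist y z) * (2*K)"
        proof (rule mult_mono)
          show "norm (lam y - lam z) \<le> L * dist y z"
            using lipschitz_onD[OF lip yT zT] by (simp add: dist_norm)
          show "norm (lam y + lam z) \<le> 2*K"
            using norm_triangle_ineq[of "lam y" "lam z"] lK[OF yT] lK[OF zT] by simp
        qed (auto simp: L0)
        finally show "dist (nl y) (nl z) \<le> 2*K*L * dist y z" by (simp add: algebra_simps)
      next
        have "0 \<le> K" using lK[of 0] T0 norm_ge_zero[of "lam 0"] by (meson atLeastAtMost_iff order_trans less_imp_le order_refl)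
        then show "0 \<le> 2*K*L" using L0 by simp
      qed
      show "negligible Nad" by (rule Nad)
      fix s assume s: "s \<in> {0..t} - Nad"
      then have sT: "s \<in> {0..T}" using t by auto
      have d: "(lam has_vector_derivative (- (lam s v* Am \<alpha> \<beta> (u1 s) (u2 s)))) (at s within {0..t})"
        using Nad'[of s] s sT t by (auto intro: has_vector_derivative_within_subset)
      show "(nl has_real_derivative 0) (at s within {0..t})"
        unfolding nl_def by (rule vd_self[OF d]) (simp add: skew)
    qed
  qed
  define mu where "mu = nl 0"
  have nl3: "\<And>t. nl t = (lam t$1)^2 + (lam t$2)^2 + (lam t$3)^2"
    by (simp add: nl_def inner3 power2_eq_square)
  have lag: "\<And>t. t \<in> {0..T} \<Longrightarrow> (p1 t)^2 + (p2 t)^2 + (p3 t)^2 = mu"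
  proof -
    fix t assume t: "t \<in> {0..T}"
    have "(p1 t)^2 + (p2 t)^2 + (p3 t)^2 = ((x t$1)^2 + (x t$2)^2 + (x t$3)^2) * ((lam t$1)^2 + (lam t$2)^2 + (lam t$3)^2)
           - (x t$1 * lam t$1 + x t$2 * lam t$2 + x t$3 * lam t$3)^2"
      unfolding p1_def p2_def p3_def by (rule id_lag)
    also have "\<dots> = nl t" using sph[OF t] orth3[OF t] nl3[of t] by simp
    finally show "(p1 t)^2 + (p2 t)^2 + (p3 t)^2 = mu" using nlc[OF t] by (simp add: mu_def)
  qed
  have T0': "0 \<in> {0..T}" using T0 by simp
  have l03: "lam 0$3 = 0" using orth3[OF T0'] by (simp add: x0 north3)
  have M0: "a * \<bar>lam 0$2\<bar> + b * \<bar>lam 0$1\<bar> = h"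
    using Mz[OF T0'] by (simp add: M_def p1_def p2_def p3_def x0 north3)
  have mu0: "mu = (lam 0$2)^2 + (lam 0$1)^2" using nl3[of 0] l03 by (simp add: mu_def)
  have key0: "h^2 \<le> (a^2+b^2) * mu"
    using cs2[of a "lam 0$2" b "lam 0$1"] M0 mu0 by simp
  have J0: "{tc..tc+\<epsilon>} \<subseteq> {0..T}" using tc tT by auto
  have dat: "\<And>t D. t \<in> {tc<..<tc+\<epsilon>} \<Longrightarrow> (lam has_vector_derivative D) (at t within {0..T})
      \<Longrightarrow> (lam has_vector_derivative D) (at t)"
  proof -
    fix t D assume t: "t \<in> {tc<..<tc+\<epsilon>}" and d: "(lam has_vector_derivative D) (at t within {0..T})"
    have "at t within {0..T} = at t" by (rule at_within_open_subset[OF t]) (use tc tT in auto)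
    then show "(lam has_vector_derivative D) (at t)" using d by simp
  qed
  have mu0p: "mu > 0" using lnz[OF T0'] by (simp add: mu_def nl_def)
  have cJ: "connected {tc..tc+\<epsilon>}" by simp
  have tcJ: "tc \<in> {tc..tc+\<epsilon>}" using ep by simp
  from sing show False
  proof
    assume s1: "\<forall>t\<in>{tc..tc + \<epsilon>}. phi1 \<alpha> \<beta> lam x t = 0"
    have P1z: "\<And>t. t \<in> {tc..tc+\<epsilon>} \<Longrightarrow> p1 t = 0"
    proof -
      fix t assume "t \<in> {tc..tc+\<epsilon>}"
      then have "phi1 \<alpha> \<beta> lam x t = 0" using s1 by blast
      then have "a * p1 t = 0" by (simp add: phi1_eq a_def p1_def)
      then show "p1 t = 0" using a0 by simp
    qed
    have HJ: "\<And>t. t \<in> {tc..tc+\<epsilon>} \<Longrightarrow> c * p3 t + b * \<bar>p2 t\<bar> = h"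
    proof -
      fix t assume t: "t \<in> {tc..tc+\<epsilon>}"
      then have "M t = 0" using J0 by (intro Mz) auto
      then show "c * p3 t + b * \<bar>p2 t\<bar> = h" using P1z[OF t] by (simp add: M_def)
    qed
    have LJ: "\<And>t. t \<in> {tc..tc+\<epsilon>} \<Longrightarrow> (p2 t)^2 + (p3 t)^2 = mu"
    proof -
      fix t assume t: "t \<in> {tc..tc+\<epsilon>}"
      then have "(p1 t)^2 + (p2 t)^2 + (p3 t)^2 = mu" using J0 by (intro lag) auto
      then show "(p2 t)^2 + (p3 t)^2 = mu" using P1z[OF t] by simp
    qed
    define Z where "Z = {z. (b^2+c^2)*z^2 + (-2*h*b)*z + (h^2 - c^2*mu) = 0}"
    have finZ: "finite Z" unfolding Z_def
      by (rule quad_finite) (use b0 c0 in \<open>simp add: add_pos_pos\<close>)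
    have inZ: "\<And>t. t \<in> {tc..tc+\<epsilon>} \<Longrightarrow> \<bar>p2 t\<bar> \<in> Z"
    proof -
      fix t assume t: "t \<in> {tc..tc+\<epsilon>}"
      have e: "c * p3 t = h - b * \<bar>p2 t\<bar>" using HJ[OF t] by simp
      have "c^2 * mu = c^2 * \<bar>p2 t\<bar>^2 + (c * p3 t)^2" using LJ[OF t] by (simp add: power_mult_distrib algebra_simps flip: LJ[OF t])
      then have "c^2 * mu = c^2 * \<bar>p2 t\<bar>^2 + (h - b * \<bar>p2 t\<bar>)^2" using e by simp
      then show "\<bar>p2 t\<bar> \<in> Z" unfolding Z_def by (simp add: power2_eq_square algebra_simps)
    qed
    have "(\<lambda>t. \<bar>p2 t\<bar>) constant_on {tc..tc+\<epsilon>}"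
    proof (rule continuous_finite_range_constant[OF cJ])
      show "continuous_on {tc..tc+\<epsilon>} (\<lambda>t. \<bar>p2 t\<bar>)"
        by (intro continuous_intros continuous_on_subset[OF cp2 J0])
      show "finite ((\<lambda>t. \<bar>p2 t\<bar>) ` {tc..tc+\<epsilon>})" by (rule finite_subset[OF _ finZ]) (use inZ in auto)
    qed
    then obtain k where k: "\<And>t. t \<in> {tc..tc+\<epsilon>} \<Longrightarrow> \<bar>p2 t\<bar> = k" unfolding constant_on_def by blast
    define P3 where "P3 = (h - b*k)/c"
    have p3c: "\<And>t. t \<in> {tc..tc+\<epsilon>} \<Longrightarrow> p3 t = P3"
      using HJ k c0 by (auto simp: P3_def field_simps)
    have "p2 constant_on {tc..tc+\<epsilon>}"
    proof (rule continuous_finite_range_constant[OF cJ])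
      show "continuous_on {tc..tc+\<epsilon>} p2" by (rule continuous_on_subset[OF cp2 J0])
      show "finite (p2 ` {tc..tc+\<epsilon>})"
      proof (rule finite_subset)
        show "p2 ` {tc..tc+\<epsilon>} \<subseteq> {k, -k}" using k by (force simp: abs_if)
      qed simp
    qed
    then obtain P2 where p2c: "\<And>t. t \<in> {tc..tc+\<epsilon>} \<Longrightarrow> p2 t = P2" unfolding constant_on_def by blast
    have HP: "c*P3 + b*\<bar>P2\<bar> = h" using HJ[OF tcJ] p2c[OF tcJ] p3c[OF tcJ] by simp
    have LP: "P2^2 + P3^2 = mu" using LJ[OF tcJ] p2c[OF tcJ] p3c[OF tcJ] by simp
    show False
    proof (cases "P2 = 0")
      case True
      then show False using final_arith0[OF c0 _ _ key0 cab h0] HP LP by simp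
    next
      case P2nz: False
      define \<sigma> where "\<sigma> = (if P2 > 0 then -1 else 1::real)"
      have u2ae: "AE t in lborel. t \<in> {tc..tc+\<epsilon>} \<longrightarrow> u2 t = \<sigma>"
        using maxc
      proof (rule eventually_mono)
        fix t assume H: "t \<in> {0..T} \<longrightarrow> ham \<alpha> \<beta> (lam t) (x t) l0 (u1 t) (u2 t) = 0 \<and>
          (\<forall>v1 v2. \<bar>v1\<bar> \<le> 1 \<longrightarrow> \<bar>v2\<bar> \<le> 1 \<longrightarrow>
             ham \<alpha> \<beta> (lam t) (x t) l0 v1 v2 \<le> ham \<alpha> \<beta> (lam t) (x t) l0 (u1 t) (u2 t))"
        show "t \<in> {tc..tc+\<epsilon>} \<longrightarrow> u2 t = \<sigma>"
        proof
          assume tJ: "t \<in> {tc..tc+\<epsilon>}"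
          then have t: "t \<in> {0..T}" using J0 by auto
          have "ham \<alpha> \<beta> (lam t) (x t) l0 (u1 t) \<sigma> \<le> ham \<alpha> \<beta> (lam t) (x t) l0 (u1 t) (u2 t)"
            using H t ub[OF t] by (auto simp: \<sigma>_def)
          then have "- (\<sigma> * b * P2) \<le> - (u2 t * b * P2)" by (simp add: hamE p2c[OF tJ])
          then have "b * (\<sigma> * (-P2)) \<le> b * (u2 t * (-P2))" by (simp add: algebra_simps)
          then have "\<sigma> * (-P2) \<le> u2 t * (-P2)" using b0 by simp
          moreover have "\<sigma> * (-P2) = \<bar>-P2\<bar>" using P2nz by (auto simp: \<sigma>_def)
          ultimately show "u2 t = \<sigma>" using ub[OF t] P2nz by (intro sign_lemma[of "u2 t" "-P2" \<sigma>]) auto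
        qed
      qed
      have wxae: "AE t in lborel. t \<in> {tc<..<tc+\<epsilon>} \<longrightarrow> a * u1 t * x t$1 - b * u2 t * x t$2 + c * x t$3 = 0"
        using adj
      proof (rule eventually_mono)
        fix t assume H: "t \<in> {0..T} \<longrightarrow>
          (lam has_vector_derivative (- (lam t v* Am \<alpha> \<beta> (u1 t) (u2 t)))) (at t within {0..T})"
        show "t \<in> {tc<..<tc+\<epsilon>} \<longrightarrow> a * u1 t * x t$1 - b * u2 t * x t$2 + c * x t$3 = 0"
        proof
          assume t: "t \<in> {tc<..<tc+\<epsilon>}"
          then have tT': "t \<in> {0..T}" and tJ: "t \<in> {tc..tc+\<epsilon>}" using tc tT by auto
          define D where "D = - (lam t v* Am \<alpha> \<beta> (u1 t) (u2 t))"
          have dl: "(lam has_vector_derivative D) (at t)" using dat[OF t] H tT' by (simp add: D_def)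
          define Q where "Q = (vector [0, P2, P3] :: real^3)"
          have "Q \<bullet> D = 0"
          proof (rule deriv_zero_open[OF vd_inner[OF dl] open_greaterThanLessThan t])
            fix s assume s: "s \<in> {tc<..<tc+\<epsilon>}"
            then have sJ: "s \<in> {tc..tc+\<epsilon>}" by auto
            have "Q \<bullet> lam s = p1 s * lam s$1 + p2 s * lam s$2 + p3 s * lam s$3"
              using P1z[OF sJ] p2c[OF sJ] p3c[OF sJ] by (simp add: Q_def inner3)
            also have "\<dots> = 0" unfolding p1_def p2_def p3_def by (rule id_pl)
            finally show "Q \<bullet> lam s = 0" .
          qed
          moreover have "Q \<bullet> D = p1 t * ((-(b*u2 t))*lam t$3 - c*lam t$2) + p2 t * (c*lam t$1 - (a*u1 t)*lam t$3)
                 + p3 t * ((a*u1 t)*lam t$2 - (-(b*u2 t))*lam t$1)"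
            using P1z[OF tJ] p2c[OF tJ] p3c[OF tJ]
            by (simp add: Q_def D_def vA inner3 a_def b_def c_def algebra_simps)
          moreover have "\<dots> = nl t * ((a*u1 t)*x t$1 + (-(b*u2 t))*x t$2 + c*x t$3)
                 - (x t$1*lam t$1 + x t$2*lam t$2 + x t$3*lam t$3) * ((a*u1 t)*lam t$1 + (-(b*u2 t))*lam t$2 + c*lam t$3)"
            unfolding p1_def p2_def p3_def nl3 by (rule id_pD)
          ultimately have "nl t * (a * u1 t * x t$1 - b * u2 t * x t$2 + c * x t$3) = 0"
            using orth3[OF tT'] by simp
          moreover have "nl t = mu" using nlc[OF tT'] by (simp add: mu_def)
          ultimately show "a * u1 t * x t$1 - b * u2 t * x t$2 + c * x t$3 = 0" using mu0p by simp
        qed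
      qed
      show False
      proof (cases "\<forall>t\<in>{tc<..<tc+\<epsilon>}. x t$1 = 0")
        case True
        obtain t where t: "t \<in> {tc<..<tc+\<epsilon>}" and H: "t \<in> {0..T} \<longrightarrow>
          (lam has_vector_derivative (- (lam t v* Am \<alpha> \<beta> (u1 t) (u2 t)))) (at t within {0..T})"
          using AE_dense[OF adj, of tc "tc+\<epsilon>"] ep by (auto simp del: greaterThanLessThan_iff)
        then have tT': "t \<in> {0..T}" and tJ: "t \<in> {tc..tc+\<epsilon>}" using tc tT by auto
        define D where "D = - (lam t v* Am \<alpha> \<beta> (u1 t) (u2 t))"
        have dl: "(lam has_vector_derivative D) (at t)" using dat[OF t] H tT' by (simp add: D_def)
        have l2z: "\<And>s. s \<in> {tc<..<tc+\<epsilon>} \<Longrightarrow> lam s$2 = 0"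
        proof -
          fix s assume s: "s \<in> {tc<..<tc+\<epsilon>}"
          then have sJ: "s \<in> {tc..tc+\<epsilon>}" and sT: "s \<in> {0..T}" using tc tT by auto
          have "p3 s * x s$1 - p1 s * x s$3 = ((x s$1)^2 + (x s$2)^2 + (x s$3)^2) * lam s$2
                 - (x s$1*lam s$1 + x s$2*lam s$2 + x s$3*lam s$3) * x s$2"
            unfolding p1_def p3_def by (rule id_l2)
          then show "lam s$2 = 0" using True s P1z[OF sJ] sph[OF sT] orth3[OF sT] by simp
        qed
        have l3z: "lam t$3 = 0"
        proof -
          have "p1 t * x t$2 - p2 t * x t$1 = ((x t$1)^2 + (x t$2)^2 + (x t$3)^2) * lam t$3
                 - (x t$1*lam t$1 + x t$2*lam t$2 + x t$3*lam t$3) * x t$3"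
            unfolding p1_def p2_def by (rule id_l3)
          then show "lam t$3 = 0" using True t P1z[OF tJ] sph[OF tT'] orth3[OF tT'] by simp
        qed
        have "(vector [0, 1, 0] :: real^3) \<bullet> D = 0"
        proof (rule deriv_zero_open[OF vd_inner[OF dl] open_greaterThanLessThan t])
          fix s assume "s \<in> {tc<..<tc+\<epsilon>}"
          then show "(vector [0, 1, 0] :: real^3) \<bullet> lam s = 0" using l2z by (simp add: inner3)
        qed
        then have "c * lam t$1 = 0" using l3z by (simp add: D_def vA inner3 c_def)
        then have "lam t$1 = 0" using c0 by simp
        then have "lam t = 0" using l2z[OF t] l3z by (simp add: vec_eq_iff forall_3)
        then show False using lnz[OF tT'] by simp
      next
        case False
        then obtain t1 where t1: "t1 \<in> {tc<..<tc+\<epsilon>}" and x1t1: "x t1$1 \<noteq> 0" by blast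
        have t1T: "t1 \<in> {0..T}" using t1 tc tT by auto
        have "\<bar>x t1$1\<bar> > 0" using x1t1 by simp
        then obtain d where d0: "d > 0"
          and d: "\<And>s. s \<in> {0..T} \<Longrightarrow> dist s t1 < d \<Longrightarrow> dist (x s$1) (x t1$1) < \<bar>x t1$1\<bar>"
          using cx[of 1] t1T unfolding continuous_on_iff by blast
        define \<delta> where "\<delta> = min (d/2) ((tc+\<epsilon>-t1)/2)"
        have \<delta>0: "\<delta> > 0" using d0 t1 by (simp add: \<delta>_def)
        have dle: "\<delta> \<le> (tc+\<epsilon>-t1)/2" unfolding \<delta>_def by (rule min.cobounded2)
        have I: "\<And>s. s \<in> {t1..t1+\<delta>} \<Longrightarrow> s \<in> {tc<..<tc+\<epsilon>}" using t1 \<delta>0 dle by auto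
        have IT: "\<And>s. s \<in> {t1..t1+\<delta>} \<Longrightarrow> s \<in> {0..T}" using I tc tT by fastforce
        have IJ: "\<And>s. s \<in> {t1..t1+\<delta>} \<Longrightarrow> s \<in> {tc..tc+\<epsilon>}" using I by fastforce
        have x1nz: "\<And>s. s \<in> {t1..t1+\<delta>} \<Longrightarrow> x s$1 \<noteq> 0"
        proof
          fix s assume s: "s \<in> {t1..t1+\<delta>}" and z: "x s$1 = 0"
          have "dist s t1 < d" using s d0 by (auto simp: \<delta>_def dist_real_def)
          then have "dist (x s$1) (x t1$1) < \<bar>x t1$1\<bar>" using d IT[OF s] by blast
          then show False using z by (simp add: dist_real_def)
        qed
        define v1 where "v1 = (\<lambda>s. (b*\<sigma>*x s$2 - c*x s$3)/(a*x s$1))"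
        have ae2: "AE s in lborel. s \<in> {t1..t1+\<delta>} \<longrightarrow> u1 s = v1 s \<and> u2 s = \<sigma>"
          using wxae u2ae
        proof (eventually_elim)
          case (elim s)
          show ?case
          proof
            assume s: "s \<in> {t1..t1+\<delta>}"
            have u2s: "u2 s = \<sigma>" using elim(2) IJ[OF s] by blast
            have "a * u1 s * x s$1 - b * u2 s * x s$2 + c * x s$3 = 0" using elim(1) I[OF s] by blast
            then have "u1 s * (a * x s$1) = b*\<sigma>*x s$2 - c*x s$3" using u2s by (simp add: algebra_simps)
            moreover have "a * x s$1 \<noteq> 0" using a0 x1nz[OF s] by simp
            ultimately have "u1 s = v1 s" by (simp add: v1_def field_simps)
            then show "u1 s = v1 s \<and> u2 s = \<sigma>" using u2s by simp
          qed
        qed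
        obtain N where N: "negligible N" and N': "\<And>s. s \<notin> N \<Longrightarrow> s \<in> {t1..t1+\<delta>} \<longrightarrow> u1 s = v1 s \<and> u2 s = \<sigma>"
          using AE_negl[OF ae2] by blast
        define g where "g = (\<lambda>s. Am \<alpha> \<beta> (v1 s) \<sigma> *v x s)"
        define Q where "Q = (vector [0, P2, P3] :: real^3)"
        define q where "q = (\<lambda>s. P2 * (c * x s$1 - a * v1 s * x s$3) + P3 * (b*\<sigma>*x s$1 + a * v1 s * x s$2))"
        have Qg: "\<And>s. Q \<bullet> g s = q s" by (simp add: Q_def g_def q_def Am_mv inner3 a_def b_def c_def algebra_simps)
        have Qx: "\<And>s. s \<in> {tc..tc+\<epsilon>} \<Longrightarrow> Q \<bullet> x s = 0"
        proof -
          fix s assume sJ: "s \<in> {tc..tc+\<epsilon>}"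
          have "Q \<bullet> x s = p1 s * x s$1 + p2 s * x s$2 + p3 s * x s$3"
            using P1z[OF sJ] p2c[OF sJ] p3c[OF sJ] by (simp add: Q_def inner3)
          also have "\<dots> = 0" unfolding p1_def p2_def p3_def by (rule id_px)
          finally show "Q \<bullet> x s = 0" .
        qed
        have intq: "\<And>t. t \<in> {t1..t1+\<delta>} \<Longrightarrow> integral {t1..t} q = 0"
        proof -
          fix t assume t: "t \<in> {t1..t1+\<delta>}"
          have tT': "t \<in> {0..T}" using IT[OF t] .
          have t1t: "0 \<le> t1" "t1 \<le> t" using t t1T by auto
          have fi0: "f integrable_on {0..t}" by (rule integrable_subinterval_real[OF fint]) (use tT' in auto)
          have "integral {0..t1} f + integral {t1..t} f = integral {0..t} f"
            by (rule Henstock_Kurzweil_Integration.integral_combine[OF t1t fi0])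
          moreover have "integral {0..t} f = x t - x 0" using xeq[OF tT'] by simp
          moreover have "integral {0..t1} f = x t1 - x 0" using xeq[OF t1T] by simp
          ultimately have ival: "integral {t1..t} f = x t - x t1" by (simp add: algebra_simps)
          have "f integrable_on {t1..t}" by (rule integrable_subinterval_real[OF fint]) (use tT' t1t in auto)
          then have "(f has_integral (x t - x t1)) {t1..t}" using ival has_integral_integral by metis
          then have "(g has_integral (x t - x t1)) {t1..t}"
          proof (rule has_integral_spike[OF N, rotated])
            fix s assume s: "s \<in> {t1..t} - N"
            then have "s \<in> {t1..t1+\<delta>}" using t by auto
            then show "g s = f s" using N'[of s] s by (simp add: f_def g_def)
          qed
          then have "((\<lambda>v. Q \<bullet> v) \<circ> g has_integral Q \<bullet> (x t - x t1)) {t1..t}"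
            by (rule has_integral_linear[OF _ bounded_linear_inner_right])
          moreover have "Q \<bullet> (x t - x t1) = 0"
            using Qx[OF IJ[OF t]] Qx[OF IJ[of t1]] \<delta>0 by (simp add: inner_diff_right)
          ultimately have "(q has_integral 0) {t1..t}" by (simp add: o_def Qg)
          then show "integral {t1..t} q = 0" by (rule integral_unique)
        qed
        have qc: "continuous_on {t1..t1+\<delta>} q"
        proof -
          have sub: "{t1..t1+\<delta>} \<subseteq> {0..T}" using IT by blast
          have cxs: "\<And>i. continuous_on {t1..t1+\<delta>} (\<lambda>s. x s$i)" by (rule continuous_on_subset[OF cx sub])
          have "continuous_on {t1..t1+\<delta>} v1" unfolding v1_def
            by (intro continuous_intros cxs) (use a0 x1nz in auto)
          then show ?thesis unfolding q_def by (intro continuous_intros cxs)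
        qed
        have F1: "((\<lambda>t. integral {t1..t} q) has_real_derivative q t1) (at t1 within {t1..t1+\<delta>})"
          by (rule integral_has_real_derivative[OF qc]) (use \<delta>0 in simp)
        have F2: "((\<lambda>t. 0) has_real_derivative q t1) (at t1 within {t1..t1+\<delta>})"
          by (rule has_field_derivative_transform_within[OF F1 zero_less_one]) (use \<delta>0 intq in auto)
        have F3: "((\<lambda>t. 0::real) has_real_derivative 0) (at t1 within {t1..t1+\<delta>})" by (rule DERIV_const)
        have nb: "at t1 within {t1..t1+\<delta>} \<noteq> bot"
          using \<delta>0 by (simp add: at_within_Icc_at_right)
        have qt1: "q t1 = 0"
          using vector_derivative_unique_within[OF nb F2[unfolded has_real_derivative_iff_has_vector_derivative]
              F3[unfolded has_real_derivative_iff_has_vector_derivative]] by simp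
        have t1J: "t1 \<in> {tc..tc+\<epsilon>}" using t1 by auto
        have t1I: "t1 \<in> {t1..t1+\<delta>}" using \<delta>0 by simp
        define w1 where "w1 = a * v1 t1"
        define w2 where "w2 = - (b * \<sigma>)"
        have Wx: "w1 * x t1$1 + w2 * x t1$2 + c * x t1$3 = 0"
          using a0 x1nz[OF t1I] by (simp add: w1_def w2_def v1_def field_simps)
        have "q t1 = p1 t1 * (w2 * x t1$3 - c * x t1$2) + p2 t1 * (c * x t1$1 - w1 * x t1$3) + p3 t1 * (w1 * x t1$2 - w2 * x t1$1)"
          using P1z[OF t1J] p2c[OF t1J] p3c[OF t1J] by (simp add: q_def w1_def w2_def algebra_simps)
        also have "\<dots> = (x t1$1*lam t1$1 + x t1$2*lam t1$2 + x t1$3*lam t1$3) * (w1*x t1$1 + w2*x t1$2 + c*x t1$3)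
              - ((x t1$1)^2 + (x t1$2)^2 + (x t1$3)^2) * (w1*lam t1$1 + w2*lam t1$2 + c*lam t1$3)"
          unfolding p1_def p2_def p3_def by (rule id_q)
        finally have Wl: "w1*lam t1$1 + w2*lam t1$2 + c*lam t1$3 = 0"
          using qt1 orth3[OF t1T] sph[OF t1T] by simp
        have "w2 * p3 t1 - c * p2 t1 = x t1$1 * (w1*lam t1$1 + w2*lam t1$2 + c*lam t1$3) - lam t1$1 * (w1*x t1$1 + w2*x t1$2 + c*x t1$3)"
          unfolding p2_def p3_def by (rule id_W1)
        then have "w2 * P3 - c * P2 = 0" using Wl Wx p2c[OF t1J] p3c[OF t1J] by simp
        then have "b * P3 = c * \<bar>P2\<bar>" using P2nz by (auto simp: w2_def \<sigma>_def abs_if)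
        then show False by (rule final_arith[OF b0 c0 _ HP LP key0 cab h0])
      qed
    qed
  next
    assume s2: "\<forall>t\<in>{tc..tc + \<epsilon>}. phi2 \<alpha> \<beta> lam x t = 0"
    have P2z: "\<And>t. t \<in> {tc..tc+\<epsilon>} \<Longrightarrow> p2 t = 0"
    proof -
      fix t assume "t \<in> {tc..tc+\<epsilon>}"
      then have "phi2 \<alpha> \<beta> lam x t = 0" using s2 by blast
      then have "b * p2 t = 0" by (simp add: phi2_eq b_def p2_def)
      then show "p2 t = 0" using b0 by simp
    qed
    have HJ: "\<And>t. t \<in> {tc..tc+\<epsilon>} \<Longrightarrow> c * p3 t + a * \<bar>p1 t\<bar> = h"
    proof -
      fix t assume t: "t \<in> {tc..tc+\<epsilon>}"
      then have "M t = 0" using J0 by (intro Mz) auto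
      then show "c * p3 t + a * \<bar>p1 t\<bar> = h" using P2z[OF t] by (simp add: M_def)
    qed
    have LJ: "\<And>t. t \<in> {tc..tc+\<epsilon>} \<Longrightarrow> (p1 t)^2 + (p3 t)^2 = mu"
    proof -
      fix t assume t: "t \<in> {tc..tc+\<epsilon>}"
      then have "(p1 t)^2 + (p2 t)^2 + (p3 t)^2 = mu" using J0 by (intro lag) auto
      then show "(p1 t)^2 + (p3 t)^2 = mu" using P2z[OF t] by simp
    qed
    define Z where "Z = {z. (a^2+c^2)*z^2 + (-2*h*a)*z + (h^2 - c^2*mu) = 0}"
    have finZ: "finite Z" unfolding Z_def
      by (rule quad_finite) (use a0 c0 in \<open>simp add: add_pos_pos\<close>)
    have inZ: "\<And>t. t \<in> {tc..tc+\<epsilon>} \<Longrightarrow> \<bar>p1 t\<bar> \<in> Z"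
    proof -
      fix t assume t: "t \<in> {tc..tc+\<epsilon>}"
      have e: "c * p3 t = h - a * \<bar>p1 t\<bar>" using HJ[OF t] by simp
      have "c^2 * mu = c^2 * \<bar>p1 t\<bar>^2 + (c * p3 t)^2" using LJ[OF t] by (simp add: power_mult_distrib algebra_simps flip: LJ[OF t])
      then have "c^2 * mu = c^2 * \<bar>p1 t\<bar>^2 + (h - a * \<bar>p1 t\<bar>)^2" using e by simp
      then show "\<bar>p1 t\<bar> \<in> Z" unfolding Z_def by (simp add: power2_eq_square algebra_simps)
    qed
    have "(\<lambda>t. \<bar>p1 t\<bar>) constant_on {tc..tc+\<epsilon>}"
    proof (rule continuous_finite_range_constant[OF cJ])
      show "continuous_on {tc..tc+\<epsilon>} (\<lambda>t. \<bar>p1 t\<bar>)"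
        by (intro continuous_intros continuous_on_subset[OF cp1 J0])
      show "finite ((\<lambda>t. \<bar>p1 t\<bar>) ` {tc..tc+\<epsilon>})" by (rule finite_subset[OF _ finZ]) (use inZ in auto)
    qed
    then obtain k where k: "\<And>t. t \<in> {tc..tc+\<epsilon>} \<Longrightarrow> \<bar>p1 t\<bar> = k" unfolding constant_on_def by blast
    define P3 where "P3 = (h - a*k)/c"
    have p3c: "\<And>t. t \<in> {tc..tc+\<epsilon>} \<Longrightarrow> p3 t = P3"
      using HJ k c0 by (auto simp: P3_def field_simps)
    have "p1 constant_on {tc..tc+\<epsilon>}"
    proof (rule continuous_finite_range_constant[OF cJ])
      show "continuous_on {tc..tc+\<epsilon>} p1" by (rule continuous_on_subset[OF cp1 J0])
      show "finite (p1 ` {tc..tc+\<epsilon>})"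
      proof (rule finite_subset)
        show "p1 ` {tc..tc+\<epsilon>} \<subseteq> {k, -k}" using k by (force simp: abs_if)
      qed simp
    qed
    then obtain P1 where p1c: "\<And>t. t \<in> {tc..tc+\<epsilon>} \<Longrightarrow> p1 t = P1" unfolding constant_on_def by blast
    have HP: "c*P3 + a*\<bar>P1\<bar> = h" using HJ[OF tcJ] p1c[OF tcJ] p3c[OF tcJ] by simp
    have LP: "P1^2 + P3^2 = mu" using LJ[OF tcJ] p1c[OF tcJ] p3c[OF tcJ] by simp
    show False
    proof (cases "P1 = 0")
      case True
      then show False using final_arith0[OF c0 _ _ key0 cab h0] HP LP by simp
    next
      case P1nz: False
      define \<sigma> where "\<sigma> = (if P1 > 0 then 1 else -1::real)"
      have u1ae: "AE t in lborel. t \<in> {tc..tc+\<epsilon>} \<longrightarrow> u1 t = \<sigma>"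
        using maxc
      proof (rule eventually_mono)
        fix t assume H: "t \<in> {0..T} \<longrightarrow> ham \<alpha> \<beta> (lam t) (x t) l0 (u1 t) (u2 t) = 0 \<and>
          (\<forall>v1 v2. \<bar>v1\<bar> \<le> 1 \<longrightarrow> \<bar>v2\<bar> \<le> 1 \<longrightarrow>
             ham \<alpha> \<beta> (lam t) (x t) l0 v1 v2 \<le> ham \<alpha> \<beta> (lam t) (x t) l0 (u1 t) (u2 t))"
        show "t \<in> {tc..tc+\<epsilon>} \<longrightarrow> u1 t = \<sigma>"
        proof
          assume tJ: "t \<in> {tc..tc+\<epsilon>}"
          then have t: "t \<in> {0..T}" using J0 by auto
          have "ham \<alpha> \<beta> (lam t) (x t) l0 \<sigma> (u2 t) \<le> ham \<alpha> \<beta> (lam t) (x t) l0 (u1 t) (u2 t)"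
            using H t ub[OF t] by (auto simp: \<sigma>_def)
          then have "\<sigma> * a * P1 \<le> u1 t * a * P1" by (simp add: hamE p1c[OF tJ])
          then have "a * (\<sigma> * P1) \<le> a * (u1 t * P1)" by (simp add: algebra_simps)
          then have "\<sigma> * P1 \<le> u1 t * P1" using a0 by simp
          moreover have "\<sigma> * P1 = \<bar>P1\<bar>" using P1nz by (auto simp: \<sigma>_def)
          ultimately show "u1 t = \<sigma>" using ub[OF t] P1nz by (intro sign_lemma[of "u1 t" P1 \<sigma>]) auto
        qed
      qed
      have wxae: "AE t in lborel. t \<in> {tc<..<tc+\<epsilon>} \<longrightarrow> a * u1 t * x t$1 - b * u2 t * x t$2 + c * x t$3 = 0"
        using adj
      proof (rule eventually_mono)
        fix t assume H: "t \<in> {0..T} \<longrightarrow>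
          (lam has_vector_derivative (- (lam t v* Am \<alpha> \<beta> (u1 t) (u2 t)))) (at t within {0..T})"
        show "t \<in> {tc<..<tc+\<epsilon>} \<longrightarrow> a * u1 t * x t$1 - b * u2 t * x t$2 + c * x t$3 = 0"
        proof
          assume t: "t \<in> {tc<..<tc+\<epsilon>}"
          then have tT': "t \<in> {0..T}" and tJ: "t \<in> {tc..tc+\<epsilon>}" using tc tT by auto
          define D where "D = - (lam t v* Am \<alpha> \<beta> (u1 t) (u2 t))"
          have dl: "(lam has_vector_derivative D) (at t)" using dat[OF t] H tT' by (simp add: D_def)
          define Q where "Q = (vector [P1, 0, P3] :: real^3)"
          have "Q \<bullet> D = 0"
          proof (rule deriv_zero_open[OF vd_inner[OF dl] open_greaterThanLessThan t])
            fix s assume s: "s \<in> {tc<..<tc+\<epsilon>}"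
            then have sJ: "s \<in> {tc..tc+\<epsilon>}" by auto
            have "Q \<bullet> lam s = p1 s * lam s$1 + p2 s * lam s$2 + p3 s * lam s$3"
              using P2z[OF sJ] p1c[OF sJ] p3c[OF sJ] by (simp add: Q_def inner3)
            also have "\<dots> = 0" unfolding p1_def p2_def p3_def by (rule id_pl)
            finally show "Q \<bullet> lam s = 0" .
          qed
          moreover have "Q \<bullet> D = p1 t * ((-(b*u2 t))*lam t$3 - c*lam t$2) + p2 t * (c*lam t$1 - (a*u1 t)*lam t$3)
                 + p3 t * ((a*u1 t)*lam t$2 - (-(b*u2 t))*lam t$1)"
            using P2z[OF tJ] p1c[OF tJ] p3c[OF tJ]
            by (simp add: Q_def D_def vA inner3 a_def b_def c_def algebra_simps)
          moreover have "\<dots> = nl t * ((a*u1 t)*x t$1 + (-(b*u2 t))*x t$2 + c*x t$3)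
                 - (x t$1*lam t$1 + x t$2*lam t$2 + x t$3*lam t$3) * ((a*u1 t)*lam t$1 + (-(b*u2 t))*lam t$2 + c*lam t$3)"
            unfolding p1_def p2_def p3_def nl3 by (rule id_pD)
          ultimately have "nl t * (a * u1 t * x t$1 - b * u2 t * x t$2 + c * x t$3) = 0"
            using orth3[OF tT'] by simp
          moreover have "nl t = mu" using nlc[OF tT'] by (simp add: mu_def)
          ultimately show "a * u1 t * x t$1 - b * u2 t * x t$2 + c * x t$3 = 0" using mu0p by simp
        qed
      qed
      show False
      proof (cases "\<forall>t\<in>{tc<..<tc+\<epsilon>}. x t$2 = 0")
        case True
        obtain t where t: "t \<in> {tc<..<tc+\<epsilon>}" and H: "t \<in> {0..T} \<longrightarrow>
          (lam has_vector_derivative (- (lam t v* Am \<alpha> \<beta> (u1 t) (u2 t)))) (at t within {0..T})"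
          using AE_dense[OF adj, of tc "tc+\<epsilon>"] ep by (auto simp del: greaterThanLessThan_iff)
        then have tT': "t \<in> {0..T}" and tJ: "t \<in> {tc..tc+\<epsilon>}" using tc tT by auto
        define D where "D = - (lam t v* Am \<alpha> \<beta> (u1 t) (u2 t))"
        have dl: "(lam has_vector_derivative D) (at t)" using dat[OF t] H tT' by (simp add: D_def)
        have l1z: "\<And>s. s \<in> {tc<..<tc+\<epsilon>} \<Longrightarrow> lam s$1 = 0"
        proof -
          fix s assume s: "s \<in> {tc<..<tc+\<epsilon>}"
          then have sJ: "s \<in> {tc..tc+\<epsilon>}" and sT: "s \<in> {0..T}" using tc tT by auto
          have "p2 s * x s$3 - p3 s * x s$2 = ((x s$1)^2 + (x s$2)^2 + (x s$3)^2) * lam s$1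
                 - (x s$1*lam s$1 + x s$2*lam s$2 + x s$3*lam s$3) * x s$1"
            unfolding p2_def p3_def by (rule id_l1)
          then show "lam s$1 = 0" using True s P2z[OF sJ] sph[OF sT] orth3[OF sT] by simp
        qed
        have l3z: "lam t$3 = 0"
        proof -
          have "p1 t * x t$2 - p2 t * x t$1 = ((x t$1)^2 + (x t$2)^2 + (x t$3)^2) * lam t$3
                 - (x t$1*lam t$1 + x t$2*lam t$2 + x t$3*lam t$3) * x t$3"
            unfolding p1_def p2_def by (rule id_l3)
          then show "lam t$3 = 0" using True t P2z[OF tJ] sph[OF tT'] orth3[OF tT'] by simp
        qed
        have "(vector [1, 0, 0] :: real^3) \<bullet> D = 0"
        proof (rule deriv_zero_open[OF vd_inner[OF dl] open_greaterThanLessThan t])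
          fix s assume "s \<in> {tc<..<tc+\<epsilon>}"
          then show "(vector [1, 0, 0] :: real^3) \<bullet> lam s = 0" using l1z by (simp add: inner3)
        qed
        then have "c * lam t$2 = 0" using l3z by (simp add: D_def vA inner3 c_def)
        then have "lam t$2 = 0" using c0 by simp
        then have "lam t = 0" using l1z[OF t] l3z by (simp add: vec_eq_iff forall_3)
        then show False using lnz[OF tT'] by simp
      next
        case False
        then obtain t1 where t1: "t1 \<in> {tc<..<tc+\<epsilon>}" and x1t1: "x t1$2 \<noteq> 0" by blast
        have t1T: "t1 \<in> {0..T}" using t1 tc tT by auto
        have "\<bar>x t1$2\<bar> > 0" using x1t1 by simp
        then obtain d where d0: "d > 0"
          and d: "\<And>s. s \<in> {0..T} \<Longrightarrow> dist s t1 < d \<Longrightarrow> dist (x s$2) (x t1$2) < \<bar>x t1$2\<bar>"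
          using cx[of 2] t1T unfolding continuous_on_iff by blast
        define \<delta> where "\<delta> = min (d/2) ((tc+\<epsilon>-t1)/2)"
        have \<delta>0: "\<delta> > 0" using d0 t1 by (simp add: \<delta>_def)
        have dle: "\<delta> \<le> (tc+\<epsilon>-t1)/2" unfolding \<delta>_def by (rule min.cobounded2)
        have I: "\<And>s. s \<in> {t1..t1+\<delta>} \<Longrightarrow> s \<in> {tc<..<tc+\<epsilon>}" using t1 \<delta>0 dle by auto
        have IT: "\<And>s. s \<in> {t1..t1+\<delta>} \<Longrightarrow> s \<in> {0..T}" using I tc tT by fastforce
        have IJ: "\<And>s. s \<in> {t1..t1+\<delta>} \<Longrightarrow> s \<in> {tc..tc+\<epsilon>}" using I by fastforce
        have x1nz: "\<And>s. s \<in> {t1..t1+\<delta>} \<Longrightarrow> x s$2 \<noteq> 0"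
        proof
          fix s assume s: "s \<in> {t1..t1+\<delta>}" and z: "x s$2 = 0"
          have "dist s t1 < d" using s d0 by (auto simp: \<delta>_def dist_real_def)
          then have "dist (x s$2) (x t1$2) < \<bar>x t1$2\<bar>" using d IT[OF s] by blast
          then show False using z by (simp add: dist_real_def)
        qed
        define v2 where "v2 = (\<lambda>s. (a*\<sigma>*x s$1 + c*x s$3)/(b*x s$2))"
        have ae2: "AE s in lborel. s \<in> {t1..t1+\<delta>} \<longrightarrow> u2 s = v2 s \<and> u1 s = \<sigma>"
          using wxae u1ae
        proof (eventually_elim)
          case (elim s)
          show ?case
          proof
            assume s: "s \<in> {t1..t1+\<delta>}"
            have u1s: "u1 s = \<sigma>" using elim(2) IJ[OF s] by blast
            have "a * u1 s * x s$1 - b * u2 s * x s$2 + c * x s$3 = 0" using elim(1) I[OF s] by blast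
            then have "u2 s * (b * x s$2) = a*\<sigma>*x s$1 + c*x s$3" using u1s by (simp add: algebra_simps)
            moreover have "b * x s$2 \<noteq> 0" using b0 x1nz[OF s] by simp
            ultimately have "u2 s = v2 s" by (simp add: v2_def field_simps)
            then show "u2 s = v2 s \<and> u1 s = \<sigma>" using u1s by simp
          qed
        qed
        obtain N where N: "negligible N" and N': "\<And>s. s \<notin> N \<Longrightarrow> s \<in> {t1..t1+\<delta>} \<longrightarrow> u2 s = v2 s \<and> u1 s = \<sigma>"
          using AE_negl[OF ae2] by blast
        define g where "g = (\<lambda>s. Am \<alpha> \<beta> \<sigma> (v2 s) *v x s)"
        define Q where "Q = (vector [P1, 0, P3] :: real^3)"
        define q where "q = (\<lambda>s. P1 * (- c * x s$2 - b * v2 s * x s$3) + P3 * (b * v2 s * x s$1 + a*\<sigma>*x s$2))"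
        have Qg: "\<And>s. Q \<bullet> g s = q s" by (simp add: Q_def g_def q_def Am_mv inner3 a_def b_def c_def algebra_simps)
        have Qx: "\<And>s. s \<in> {tc..tc+\<epsilon>} \<Longrightarrow> Q \<bullet> x s = 0"
        proof -
          fix s assume sJ: "s \<in> {tc..tc+\<epsilon>}"
          have "Q \<bullet> x s = p1 s * x s$1 + p2 s * x s$2 + p3 s * x s$3"
            using P2z[OF sJ] p1c[OF sJ] p3c[OF sJ] by (simp add: Q_def inner3)
          also have "\<dots> = 0" unfolding p1_def p2_def p3_def by (rule id_px)
          finally show "Q \<bullet> x s = 0" .
        qed
        have intq: "\<And>t. t \<in> {t1..t1+\<delta>} \<Longrightarrow> integral {t1..t} q = 0"
        proof -
          fix t assume t: "t \<in> {t1..t1+\<delta>}"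
          have tT': "t \<in> {0..T}" using IT[OF t] .
          have t1t: "0 \<le> t1" "t1 \<le> t" using t t1T by auto
          have fi0: "f integrable_on {0..t}" by (rule integrable_subinterval_real[OF fint]) (use tT' in auto)
          have "integral {0..t1} f + integral {t1..t} f = integral {0..t} f"
            by (rule Henstock_Kurzweil_Integration.integral_combine[OF t1t fi0])
          moreover have "integral {0..t} f = x t - x 0" using xeq[OF tT'] by simp
          moreover have "integral {0..t1} f = x t1 - x 0" using xeq[OF t1T] by simp
          ultimately have ival: "integral {t1..t} f = x t - x t1" by (simp add: algebra_simps)
          have "f integrable_on {t1..t}" by (rule integrable_subinterval_real[OF fint]) (use tT' t1t in auto)
          then have "(f has_integral (x t - x t1)) {t1..t}" using ival has_integral_integral by metis
          then have "(g has_integral (x t - x t1)) {t1..t}"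
          proof (rule has_integral_spike[OF N, rotated])
            fix s assume s: "s \<in> {t1..t} - N"
            then have "s \<in> {t1..t1+\<delta>}" using t by auto
            then show "g s = f s" using N'[of s] s by (simp add: f_def g_def)
          qed
          then have "((\<lambda>v. Q \<bullet> v) \<circ> g has_integral Q \<bullet> (x t - x t1)) {t1..t}"
            by (rule has_integral_linear[OF _ bounded_linear_inner_right])
          moreover have "Q \<bullet> (x t - x t1) = 0"
            using Qx[OF IJ[OF t]] Qx[OF IJ[of t1]] \<delta>0 by (simp add: inner_diff_right)
          ultimately have "(q has_integral 0) {t1..t}" by (simp add: o_def Qg)
          then show "integral {t1..t} q = 0" by (rule integral_unique)
        qed
        have qc: "continuous_on {t1..t1+\<delta>} q"
        proof -
          have sub: "{t1..t1+\<delta>} \<subseteq> {0..T}" using IT by blast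
          have cxs: "\<And>i. continuous_on {t1..t1+\<delta>} (\<lambda>s. x s$i)" by (rule continuous_on_subset[OF cx sub])
          have "continuous_on {t1..t1+\<delta>} v2" unfolding v2_def
            by (intro continuous_intros cxs) (use b0 x1nz in auto)
          then show ?thesis unfolding q_def by (intro continuous_intros cxs)
        qed
        have F1: "((\<lambda>t. integral {t1..t} q) has_real_derivative q t1) (at t1 within {t1..t1+\<delta>})"
          by (rule integral_has_real_derivative[OF qc]) (use \<delta>0 in simp)
        have F2: "((\<lambda>t. 0) has_real_derivative q t1) (at t1 within {t1..t1+\<delta>})"
          by (rule has_field_derivative_transform_within[OF F1 zero_less_one]) (use \<delta>0 intq in auto)
        have F3: "((\<lambda>t. 0::real) has_real_derivative 0) (at t1 within {t1..t1+\<delta>})" by (rule DERIV_const)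
        have nb: "at t1 within {t1..t1+\<delta>} \<noteq> bot"
          using \<delta>0 by (simp add: at_within_Icc_at_right)
        have qt1: "q t1 = 0"
          using vector_derivative_unique_within[OF nb F2[unfolded has_real_derivative_iff_has_vector_derivative]
              F3[unfolded has_real_derivative_iff_has_vector_derivative]] by simp
        have t1J: "t1 \<in> {tc..tc+\<epsilon>}" using t1 by auto
        have t1I: "t1 \<in> {t1..t1+\<delta>}" using \<delta>0 by simp
        define w1 where "w1 = a * \<sigma>"
        define w2 where "w2 = - (b * v2 t1)"
        have Wx: "w1 * x t1$1 + w2 * x t1$2 + c * x t1$3 = 0"
          using b0 x1nz[OF t1I] by (simp add: w1_def w2_def v2_def field_simps)
        have "q t1 = p1 t1 * (w2 * x t1$3 - c * x t1$2) + p2 t1 * (c * x t1$1 - w1 * x t1$3) + p3 t1 * (w1 * x t1$2 - w2 * x t1$1)"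
          using P2z[OF t1J] p1c[OF t1J] p3c[OF t1J] by (simp add: q_def w1_def w2_def algebra_simps)
        also have "\<dots> = (x t1$1*lam t1$1 + x t1$2*lam t1$2 + x t1$3*lam t1$3) * (w1*x t1$1 + w2*x t1$2 + c*x t1$3)
              - ((x t1$1)^2 + (x t1$2)^2 + (x t1$3)^2) * (w1*lam t1$1 + w2*lam t1$2 + c*lam t1$3)"
          unfolding p1_def p2_def p3_def by (rule id_q)
        finally have Wl: "w1*lam t1$1 + w2*lam t1$2 + c*lam t1$3 = 0"
          using qt1 orth3[OF t1T] sph[OF t1T] by simp
        have "c * p1 t1 - w1 * p3 t1 = x t1$2 * (w1*lam t1$1 + w2*lam t1$2 + c*lam t1$3) - lam t1$2 * (w1*x t1$1 + w2*x t1$2 + c*x t1$3)"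
          unfolding p1_def p3_def by (rule id_W2)
        then have "c * P1 - w1 * P3 = 0" using Wl Wx p1c[OF t1J] p3c[OF t1J] by simp
        then have "a * P3 = c * \<bar>P1\<bar>" using P1nz by (auto simp: w1_def \<sigma>_def abs_if)
        then show False by (rule final_arith[OF a0 c0 _ HP LP key0 cab h0])
      qed
    qed
  qed
qed

end
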